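(* Let $n\ge 1$ and $m\ge 2$ both be odd. Then $L_m(n)=0$.
   Context: The Ducci function $D:\mathbb{Z}_m^n\to\mathbb{Z}_m^n$ is $D(x_1,\dots,x_n)=(x_1+x_2,\,x_2+x_3,\,\dots,\,x_{n-1}+x_n,\,x_n+x_1)$, entries mod $m$. For $\mathbf{u}\in\mathbb{Z}_m^n$, $\mathrm{Len}(\mathbf{u})$ is the smallest $l\ge 0$ such that $D^{l+k}(\mathbf{u})=D^l(\mathbf{u})$ for some $k\ge 1$. $L_m(n)=\mathrm{Len}(0,0,\dots,0,1)$. *)

theory Defs
  imports Main
begin

text \<open>Tuples in Z_m^n are lists of length n with entries in {0..<m} (integers mod m).
  Entry i (0-based) of D(x) is x_i + x_{i+1} (indices cyclic), reduced mod m.\<close>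

definition ducci :: "int \<Rightarrow> int list \<Rightarrow> int list" where
  "ducci m xs = map (\<lambda>i. (xs ! i + xs ! ((i + 1) mod length xs)) mod m) [0..<length xs]"

definition Len :: "int \<Rightarrow> int list \<Rightarrow> nat" where
  "Len m u = (LEAST l. \<exists>k\<ge>1. (ducci m ^^ (l + k)) u = (ducci m ^^ l) u)"

definition L :: "int \<Rightarrow> nat \<Rightarrow> nat" where
  "L m n = Len m (replicate (n - 1) 0 @ [1])"

end

theory Submission
  imports Defs "HOL-Library.FuncSet"
begin

lemma ducci_len: "length (ducci m xs) = length xs"
  by (simp add: ducci_def)

lemma ducci_nth: "i < length xs \<Longrightarrow> ducci m xs ! i = (xs ! i + xs ! ((i + 1) mod length xs)) mod m"
  by (simp add: ducci_def)

lemma ducci_S: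
  assumes "m > 0" "set xs \<subseteq> {0..<m}"
  shows "set (ducci m xs) \<subseteq> {0..<m}"
  using assms by (auto simp: ducci_def)

lemma ducci_inj:
  fixes m :: int
  assumes m: "m > 0" "odd m" and n: "odd n"
    and x: "length x = n" "set x \<subseteq> {0..<m}"
    and y: "length y = n" "set y \<subseteq> {0..<m}"
    and eq: "ducci m x = ducci m y"
  shows "x = y"
proof -
  define d where "d i = x ! i - y ! i" for i
  have np: "n > 0" using n by (rule odd_pos)
  have step: "m dvd (d a + d ((a + 1) mod n))" if "a < n" for a
  proof -
    have "ducci m x ! a = ducci m y ! a" using eq by simp
    then have "(x ! a + x ! ((a + 1) mod n)) mod m = (y ! a + y ! ((a + 1) mod n)) mod m"
      using that x y by (simp add: ducci_nth)
    then have "m dvd (x ! a + x ! ((a + 1) mod n)) - (y ! a + y ! ((a + 1) mod n))"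
      by (simp add: mod_eq_dvd_iff)
    then show ?thesis by (simp add: d_def algebra_simps)
  qed
  have gen: "m dvd (d i - (-1) ^ j * d ((i + j) mod n))" if "i < n" for i j
  proof (induction j)
    case 0
    then show ?case using that by simp
  next
    case (Suc j)
    define b where "b = (i + j) mod n"
    have b: "b < n" using np by (simp add: b_def)
    have b': "(b + 1) mod n = (i + Suc j) mod n"
      by (simp add: b_def mod_Suc_eq)
    have e: "d i - (-1) ^ Suc j * d ((b + 1) mod n)
        = (d i - (-1) ^ j * d b) + (-1) ^ j * (d b + d ((b + 1) mod n))"
      by (simp add: algebra_simps)
    have "m dvd (d i - (-1) ^ j * d b) + (-1) ^ j * (d b + d ((b + 1) mod n))"
      using Suc.IH step[OF b] by (simp add: b_def)
    then show ?case using e b' by metis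
  qed
  have "x ! i = y ! i" if "i < n" for i
  proof -
    have "m dvd (d i - (-1) ^ n * d ((i + n) mod n))" by (rule gen[OF that])
    then have "m dvd 2 * d i" using n that by simp
    moreover have "coprime m 2" using m by simp
    ultimately have "m dvd d i" using coprime_dvd_mult_right_iff by blast
    then have "x ! i mod m = y ! i mod m" by (simp add: d_def mod_eq_dvd_iff)
    moreover have "x ! i \<in> {0..<m}" "y ! i \<in> {0..<m}" proof -
      have "x ! i \<in> set x" "y ! i \<in> set y" using x(1) y(1) that by simp_all
      then show "x ! i \<in> {0..<m}" "y ! i \<in> {0..<m}" using x(2) y(2) by blast+
    qed
    ultimately show ?thesis by simp
  qed
  then show ?thesis using x y by (simp add: nth_equalityI)
qed

theorem theorem2p2:
  fixes m :: int and n :: nat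
  assumes "n \<ge> 1" and "odd n" and "m \<ge> 2" and "odd m"
  shows "L m n = 0"
proof -
  define S where "S = {xs. set xs \<subseteq> {0..<m} \<and> length xs = n}"
  define p where "p xs = (if xs \<in> S then ducci m xs else xs)" for xs
  have m0: "m > 0" using assms by simp
  have finS: "finite S" unfolding S_def by (rule finite_lists_length_eq) simp
  have pS: "xs \<in> S \<Longrightarrow> p xs \<in> S" for xs
    using ducci_S[OF m0] by (auto simp: p_def S_def ducci_len)
  have "inj p"
  proof (rule injI)
    fix a b assume ab: "p a = p b"
    show "a = b"
    proof (cases "a \<in> S"; cases "b \<in> S")
      assume "a \<in> S" "b \<in> S"
      then show ?thesis using ab ducci_inj[OF m0 \<open>odd m\<close> \<open>odd n\<close>]
        by (auto simp: p_def S_def)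
    next
      assume "a \<in> S" "b \<notin> S"
      then show ?thesis using ab pS[of a] by (auto simp: p_def)
    next
      assume "a \<notin> S" "b \<in> S"
      then show ?thesis using ab pS[of b] by (auto simp: p_def)
    qed (use ab in \<open>auto simp: p_def\<close>)
  qed
  define u where "u = replicate (n - 1) (0::int) @ [1]"
  have uS: "u \<in> S" using assms by (auto simp: u_def S_def)
  have orb: "(p ^^ k) u \<in> S" for k
    by (induction k) (auto simp: uS pS)
  have same: "(p ^^ k) u = (ducci m ^^ k) u" for k
  proof (induction k)
    case (Suc k)
    have "(p ^^ Suc k) u = p ((p ^^ k) u)" by simp
    also have "\<dots> = ducci m ((p ^^ k) u)" using orb[of k] by (simp add: p_def)
    finally show ?case using Suc by simp
  qed simp
  have "finite {y. \<exists>k. y = (p ^^ k) u}"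
    using orb by (auto intro: finite_subset[OF _ finS])
  then obtain k where k: "k > 0" "(p ^^ k) u = u"
    using funpow_inj_finite[OF \<open>inj p\<close>] by blast
  have "\<exists>k\<ge>1. (ducci m ^^ (0 + k)) u = (ducci m ^^ 0) u"
    using k same[of k] by (intro exI[of _ k]) auto
  then show ?thesis unfolding L_def Len_def u_def[symmetric]
    by (rule Least_eq_0)
qed

end
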